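(* Let $P(t)$ and $Q(t)$ be real polynomials of degree at most $2$, and let $I\subset\mathbb{R}$ be an interval such that $P>0$ and $Q>0$ on $I$. Suppose $\Delta_P>0$ and that there is a constant $T>0$ such that (i) $\Delta_Q\ge T^{3/2}\Delta_P$, and (ii) $TP(t)\ge Q(t)$ for all $t\in I$. Then $G(t)=\sqrt{P(t)}-\sqrt{Q(t)}$ is convex on $I$.
   Context: For a real polynomial written as $R(t)=\alpha+2\beta t+\gamma t^2$ (where $\gamma=0$ is allowed), its discriminant is defined as $\Delta_R=\beta^2-\alpha\gamma$. *)

theory Defs
  imports "HOL-Analysis.Analysis" "HOL-Computational_Algebra.Polynomial"
begin

text \<open>For R(t) = alpha + 2 beta t + gamma t^2 (degree at most 2), the discriminant is
  beta^2 - alpha gamma, i.e. with alpha = coeff R 0, beta = coeff R 1 / 2, gamma = coeff R 2.\<close>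
definition discr :: "real poly \<Rightarrow> real" where
  "discr R = (coeff R 1 / 2)^2 - coeff R 0 * coeff R 2"

end

theory Submission
  imports Defs
begin

lemma inner: "((\<lambda>t. a+b*t+c*t^2) has_real_derivative (b+2*c*t)) (at (t::real))"
  by (auto intro!: derivative_eq_intros)

lemma d1:
  fixes a b c t :: real
  assumes "a + b*t + c*t^2 > 0"
  shows "((\<lambda>t. sqrt (a + b*t + c*t^2)) has_real_derivative (b + 2*c*t) / (2 * sqrt (a + b*t + c*t^2))) (at t)"
proof -
  have "((\<lambda>t. sqrt (a + b*t + c*t^2)) has_real_derivative inverse (sqrt (a + b*t + c*t^2)) / 2 * (b + 2*c*t)) (at t)"
    using DERIV_chain2[OF DERIV_real_sqrt[OF assms] inner] .
  then show ?thesis by (simp add: divide_simps mult.commute)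
qed

lemma d2:
  fixes a b c t :: real
  assumes "a + b*t + c*t^2 > 0"
  shows "((\<lambda>t. (b + 2*c*t) / (2 * sqrt (a + b*t + c*t^2))) has_real_derivative
     - ((b/2)^2 - a*c) / ((a + b*t + c*t^2) * sqrt (a + b*t + c*t^2))) (at t)"
proof -
  define R where "R = a + b*t + c*t^2"
  have R: "R > 0" using assms R_def by simp
  have s: "sqrt R > 0" "sqrt R * sqrt R = R" using R by auto
  have n: "((\<lambda>t. b + 2*c*t) has_real_derivative 2*c) (at t)"
    by (auto intro!: derivative_eq_intros)
  have g: "((\<lambda>t. 2 * sqrt (a + b*t + c*t^2)) has_real_derivative 2 * ((b + 2*c*t) / (2 * sqrt R))) (at t)"
    using DERIV_cmult[OF d1[OF assms], of 2] R_def by simp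
  have "((\<lambda>t. (b + 2*c*t) / (2 * sqrt (a + b*t + c*t^2))) has_real_derivative
     (2*c * (2 * sqrt R) - (2 * ((b + 2*c*t) / (2 * sqrt R))) * (b + 2*c*t)) / ((2 * sqrt R)^2)) (at t)"
    using DERIV_quotient[OF n g] s R_def by simp
  moreover have "(2*c * (2 * sqrt R) - (2 * ((b + 2*c*t) / (2 * sqrt R))) * (b + 2*c*t)) / ((2 * sqrt R)^2)
     = - ((b/2)^2 - a*c) / (R * sqrt R)"
  proof -
    have "(2*c * (2 * sqrt R) - (2 * ((b + 2*c*t) / (2 * sqrt R))) * (b + 2*c*t)) / ((2 * sqrt R)^2)
       = (4*c*R - (b + 2*c*t)^2) / (4 * R * sqrt R)"
    proof -
      have gen: "(2*c * (2 * r) - (2 * ((b + 2*c*t) / (2 * r))) * (b + 2*c*t)) / ((2 * r)^2)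
         = (4*c*(r*r) - (b + 2*c*t)^2) / (4 * (r*r) * r)" if "r > 0" for r :: real
        using that by (simp add: field_simps power2_eq_square)
      show ?thesis using gen[OF s(1)] s(2) by simp
    qed
    also have "4*c*R - (b + 2*c*t)^2 = - 4 * ((b/2)^2 - a*c)"
      unfolding R_def by (simp add: algebra_simps power2_eq_square)
    finally show ?thesis using s by (simp add: field_simps)
  qed
  ultimately show ?thesis using R_def by simp
qed

lemma polyexp:
  fixes P :: "real poly" assumes "degree P \<le> 2"
  shows "poly P t = coeff P 0 + coeff P 1 * t + coeff P 2 * t^2"
proof -
  have "poly P t = (\<Sum>i\<le>2. coeff P i * t ^ i)"
    unfolding poly_altdef
    by (rule sum.mono_neutral_left) (use assms in \<open>auto simp: coeff_eq_0\<close>)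
  also have "\<dots> = coeff P 0 + coeff P 1 * t + coeff P 2 * t^2"
    by (simp add: numeral_2_eq_2)
  finally show ?thesis .
qed

lemma key_ineq:
  fixes DP DQ p q T :: real
  assumes "DP > 0" "T > 0" "DQ \<ge> T powr (3/2) * DP" "p > 0" "q > 0" "T * p \<ge> q"
  shows "DP / (p * sqrt p) \<le> DQ / (q * sqrt q)"
proof -
  have Tp: "T powr (3/2) = T * sqrt T"
  proof -
    have "T powr (3/2) = T powr (1 + 1/2)" by simp
    also have "\<dots> = T powr 1 * T powr (1/2)" by (rule powr_add)
    finally have "T powr (3/2) = T powr 1 * T powr (1/2)" .
    then show ?thesis using assms(2) by (simp add: powr_half_sqrt abs_of_pos)
  qed
  have "q * sqrt q \<le> (T*p) * sqrt (T*p)"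
    using assms by (intro mult_mono) auto
  also have "\<dots> = (T * sqrt T) * (p * sqrt p)" by (simp add: real_sqrt_mult)
  finally have qq: "q * sqrt q \<le> (T * sqrt T) * (p * sqrt p)" .
  have pos: "q * sqrt q > 0" "p * sqrt p > 0" "T * sqrt T > 0" using assms by auto
  have "DP / (p * sqrt p) = (T * sqrt T * DP) / ((T * sqrt T) * (p * sqrt p))"
    using pos(3) by (subst mult_divide_mult_cancel_left) auto
  also have "\<dots> \<le> (T * sqrt T * DP) / (q * sqrt q)"
    using pos qq assms(1) by (intro divide_left_mono) auto
  also have "\<dots> \<le> DQ / (q * sqrt q)"
    using pos assms(3) Tp by (intro divide_right_mono) auto
  finally show ?thesis .
qed

theorem lemma7:
  fixes P Q :: "real poly" and I :: "real set" and T :: real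
  assumes "degree P \<le> 2" and "degree Q \<le> 2"
    and "is_interval I"
    and "\<forall>t\<in>I. poly P t > 0" and "\<forall>t\<in>I. poly Q t > 0"
    and "discr P > 0"
    and "T > 0"
    and "discr Q \<ge> T powr (3/2) * discr P"
    and "\<forall>t\<in>I. T * poly P t \<ge> poly Q t"
  shows "convex_on I (\<lambda>t. sqrt (poly P t) - sqrt (poly Q t))"
proof -
  define a b c where "a = coeff P 0" "b = coeff P 1" "c = coeff P 2"
  define a' b' c' where "a' = coeff Q 0" "b' = coeff Q 1" "c' = coeff Q 2"
  have eP: "\<And>t. poly P t = a + b*t + c*t^2" using polyexp[OF assms(1)] a_b_c_def by simp
  have eQ: "\<And>t. poly Q t = a' + b'*t + c'*t^2" using polyexp[OF assms(2)] a'_b'_c'_def by simp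
  have dP: "discr P = (b/2)^2 - a*c" using a_b_c_def by (simp add: discr_def)
  have dQ: "discr Q = (b'/2)^2 - a'*c'" using a'_b'_c'_def by (simp add: discr_def)
  define f' where "f' t = (b + 2*c*t) / (2 * sqrt (a + b*t + c*t^2)) - (b' + 2*c'*t) / (2 * sqrt (a' + b'*t + c'*t^2))" for t
  define f'' where "f'' t = - ((b/2)^2 - a*c) / ((a + b*t + c*t^2) * sqrt (a + b*t + c*t^2))
     + ((b'/2)^2 - a'*c') / ((a' + b'*t + c'*t^2) * sqrt (a' + b'*t + c'*t^2))" for t
  show ?thesis
  proof (rule convex_on_realI[where f'=f'])
    show "connected I" using assms(3) is_interval_connected by blast
  next
    fix x assume "x \<in> I"
    then have "a + b*x + c*x^2 > 0" "a' + b'*x + c'*x^2 > 0" using assms(4,5) eP eQ by auto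
    then show "((\<lambda>t. sqrt (poly P t) - sqrt (poly Q t)) has_real_derivative f' x) (at x)"
      unfolding eP eQ f'_def by (intro derivative_intros d1)
  next
    fix x y assume xy: "x \<in> I" "y \<in> I" "x \<le> y"
    have sub: "z \<in> I" if "x \<le> z" "z \<le> y" for z
      using assms(3) xy that unfolding is_interval_1 by blast
    have D: "(f' has_real_derivative f'' z) (at z) \<and> f'' z \<ge> 0" if z: "x \<le> z" "z \<le> y" for z
    proof -
      from z have zI: "z \<in> I" by (rule sub)
      have p: "a + b*z + c*z^2 > 0" and q: "a' + b'*z + c'*z^2 > 0"
        using zI assms(4,5) eP eQ by auto
      have eq: "f'' z = (- ((b/2)^2 - a*c) / ((a + b*z + c*z^2) * sqrt (a + b*z + c*z^2)))
         - (- ((b'/2)^2 - a'*c') / ((a' + b'*z + c'*z^2) * sqrt (a' + b'*z + c'*z^2)))"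
        unfolding f''_def by (simp only: diff_minus_eq_add)
      have "(f' has_real_derivative f'' z) (at z)"
        unfolding eq f'_def by (rule DERIV_diff[OF d2[OF p] d2[OF q]])
      moreover have "f'' z \<ge> 0"
      proof -
        have k: "((b/2)^2 - a*c) / ((a + b*z + c*z^2) * sqrt (a + b*z + c*z^2))
          \<le> ((b'/2)^2 - a'*c') / ((a' + b'*z + c'*z^2) * sqrt (a' + b'*z + c'*z^2))"
          using key_ineq[of "discr P" T "discr Q" "a + b*z + c*z^2" "a' + b'*z + c'*z^2"]
            assms(6,7,8) p q assms(9) zI eP eQ dP dQ by auto
        have m: "- ((b/2)^2 - a*c) / ((a + b*z + c*z^2) * sqrt (a + b*z + c*z^2))
          = - (((b/2)^2 - a*c) / ((a + b*z + c*z^2) * sqrt (a + b*z + c*z^2)))"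
          by (rule minus_divide_left[symmetric])
        show ?thesis unfolding f''_def m using k by linarith
      qed
      ultimately show ?thesis by blast
    qed
    show "f' x \<le> f' y"
    proof (rule DERIV_nonneg_imp_increasing_open[OF xy(3)])
      show "\<exists>y. (f' has_real_derivative y) (at z) \<and> 0 \<le> y" if "x < z" "z < y" for z
        using D[of z] that by auto
      show "continuous_on {x..y} f'"
        using D by (intro continuous_at_imp_continuous_on ballI DERIV_isCont) auto
    qed
  qed
qed

end
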